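(* Let $\mathcal T=(T,\lambda)$ be a temporal oriented tree with connectivity graph $G$, and let $H$ be an induced cycle of $G$ of length at least $4$. Then for every vertex $v\in V(H)$ and every arc $a$ of $T$ incident with $v$, all vertices of $V(H)\setminus\{v\}$ lie in the same connected component of $T\setminus\{a\}$ (the forest obtained from $T$ by deleting the arc $a$).
   Context: A temporal digraph is a pair $(D,\lambda)$ with $D=(V,A)$ a finite digraph and $\lambda:A\to 2^{\{1,\dots,t_{\max}\}}$ giving the time-steps at which each arc is active. A temporal oriented tree $\mathcal T=(T,\lambda)$ is one whose underlying digraph $T$ is an orientation of a tree. A temporal path is a sequence $(v_1,v_2,t_1),\dots,(v_{k-1},v_k,t_{k-1})$ with pairwise distinct $v_i$, $\overrightarrow{v_iv_{i+1}}\in A$, $t_i\in\lambda(\overrightarrow{v_iv_{i+1}})$ and $t_1<\dots<t_{k-1}$. Two vertices $u\ne v$ are temporally connected if there is a temporal path from $u$ to $v$ or from $v$ to $u$. The connectivity graph of $\mathcal T$ is the undirected graph $G$ with $V(G)=V(T)$ and $uv\in E(G)$ iff $u\neq v$ and $u,v$ are temporally connected. *)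

theory Defs
  imports Main
begin

definition temporal_digraph ::
  "'a set \<Rightarrow> ('a \<times> 'a) set \<Rightarrow> ('a \<times> 'a \<Rightarrow> nat set) \<Rightarrow> nat \<Rightarrow> bool" where
  "temporal_digraph V A lam tmax \<longleftrightarrow>
     finite V \<and> A \<subseteq> V \<times> V \<and> (\<forall>a\<in>A. lam a \<subseteq> {1..tmax})"

definition und :: "('a \<times> 'a) set \<Rightarrow> ('a \<times> 'a) set" where
  "und A = A \<union> A\<inverse>"

definition is_cycle :: "('a \<times> 'a) set \<Rightarrow> 'a list \<Rightarrow> bool" where
  "is_cycle E cs \<longleftrightarrow> length cs \<ge> 3 \<and> distinct cs \<and>
     (\<forall>i < length cs. (cs ! i, cs ! ((i + 1) mod length cs)) \<in> E)"

definition underlying_tree :: "'a set \<Rightarrow> ('a \<times> 'a) set \<Rightarrow> bool" where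
  "underlying_tree V A \<longleftrightarrow> V \<noteq> {} \<and>
     (\<forall>u\<in>V. \<forall>v\<in>V. (u, v) \<in> (und A)\<^sup>*) \<and>
     \<not> (\<exists>cs. set cs \<subseteq> V \<and> is_cycle (und A) cs)"

definition oriented_tree :: "'a set \<Rightarrow> ('a \<times> 'a) set \<Rightarrow> bool" where
  "oriented_tree V A \<longleftrightarrow> (\<forall>v. (v, v) \<notin> A) \<and> (\<forall>u v. (u, v) \<in> A \<longrightarrow> (v, u) \<notin> A) \<and>
     underlying_tree V A"

definition temporal_oriented_tree ::
  "'a set \<Rightarrow> ('a \<times> 'a) set \<Rightarrow> ('a \<times> 'a \<Rightarrow> nat set) \<Rightarrow> nat \<Rightarrow> bool" where
  "temporal_oriented_tree V A lam tmax \<longleftrightarrow> temporal_digraph V A lam tmax \<and> oriented_tree V A"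

definition temporal_path ::
  "('a \<times> 'a) set \<Rightarrow> ('a \<times> 'a \<Rightarrow> nat set) \<Rightarrow> 'a list \<Rightarrow> nat list \<Rightarrow> bool" where
  "temporal_path A lam vs ts \<longleftrightarrow> vs \<noteq> [] \<and> length ts = length vs - 1 \<and> distinct vs \<and>
     (\<forall>i < length ts. (vs ! i, vs ! Suc i) \<in> A \<and> ts ! i \<in> lam (vs ! i, vs ! Suc i)) \<and>
     sorted_wrt (<) ts"

definition has_temporal_path ::
  "('a \<times> 'a) set \<Rightarrow> ('a \<times> 'a \<Rightarrow> nat set) \<Rightarrow> 'a \<Rightarrow> 'a \<Rightarrow> bool" where
  "has_temporal_path A lam u v \<longleftrightarrow>
     (\<exists>vs ts. temporal_path A lam vs ts \<and> hd vs = u \<and> last vs = v)"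

definition temporally_connected ::
  "('a \<times> 'a) set \<Rightarrow> ('a \<times> 'a \<Rightarrow> nat set) \<Rightarrow> 'a \<Rightarrow> 'a \<Rightarrow> bool" where
  "temporally_connected A lam u v \<longleftrightarrow>
     u \<noteq> v \<and> (has_temporal_path A lam u v \<or> has_temporal_path A lam v u)"

definition conn_graph_edges ::
  "'a set \<Rightarrow> ('a \<times> 'a) set \<Rightarrow> ('a \<times> 'a \<Rightarrow> nat set) \<Rightarrow> ('a \<times> 'a) set" where
  "conn_graph_edges V A lam = {(u, v). u \<in> V \<and> v \<in> V \<and> temporally_connected A lam u v}"

definition induced_cycle :: "'a set \<Rightarrow> ('a \<times> 'a) set \<Rightarrow> 'a list \<Rightarrow> bool" where
  "induced_cycle V E cs \<longleftrightarrow> set cs \<subseteq> V \<and> is_cycle E cs \<and>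
     (\<forall>i < length cs. \<forall>j < length cs. (cs ! i, cs ! j) \<in> E \<longrightarrow>
        j = (i + 1) mod length cs \<or> i = (j + 1) mod length cs)"

end

theory Submission
  imports Defs
begin

lemma path_avoid:
  assumes tp: "temporal_path A lam vs ts" and a: "a \<in> A" and va: "v = fst a \<or> v = snd a"
    and nv: "v \<notin> set vs"
  shows "(hd vs, last vs) \<in> (und (A - {a}))\<^sup>*"
proof -
  from tp have ne: "vs \<noteq> []" and lt: "length ts = length vs - 1"
    and ar: "\<forall>i < length ts. (vs ! i, vs ! Suc i) \<in> A"
    unfolding temporal_path_def by auto
  have "\<forall>k < length vs. (hd vs, vs ! k) \<in> (und (A - {a}))\<^sup>*"
  proof (intro allI impI)
    fix k assume "k < length vs"
    then show "(hd vs, vs ! k) \<in> (und (A - {a}))\<^sup>*"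
    proof (induction k)
      case 0 then show ?case using ne by (simp add: hd_conv_nth)
    next
      case (Suc k)
      have e: "(vs ! k, vs ! Suc k) \<in> A" using ar lt Suc.prems by auto
      have "vs ! k \<noteq> v" "vs ! Suc k \<noteq> v" using nv Suc.prems by auto
      then have "(vs ! k, vs ! Suc k) \<noteq> a" using va by auto
      then have "(vs ! k, vs ! Suc k) \<in> und (A - {a})" using e unfolding und_def by auto
      then show ?case using Suc by (meson Suc_lessD rtrancl.rtrancl_into_rtrancl)
    qed
  qed
  then show ?thesis using ne by (simp add: last_conv_nth)
qed

lemma path_split:
  assumes tp: "temporal_path A lam vs ts" and j: "j < length vs"
  shows "has_temporal_path A lam (hd vs) (vs ! j) \<and> has_temporal_path A lam (vs ! j) (last vs)"
proof -
  from tp have ne: "vs \<noteq> []" and lt: "length ts = length vs - 1" and d: "distinct vs"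
    and ar: "\<forall>i < length ts. (vs ! i, vs ! Suc i) \<in> A \<and> ts ! i \<in> lam (vs ! i, vs ! Suc i)"
    and s: "sorted_wrt (<) ts"
    unfolding temporal_path_def by auto
  have 1: "temporal_path A lam (take (Suc j) vs) (take j ts)"
    unfolding temporal_path_def using ne lt d ar s j by auto
  have 2: "temporal_path A lam (drop j vs) (drop j ts)"
    unfolding temporal_path_def using ne lt d ar s j by auto
  have "hd (take (Suc j) vs) = hd vs" "last (take (Suc j) vs) = vs ! j"
    using ne j by (auto simp: hd_conv_nth last_conv_nth)
  moreover have "hd (drop j vs) = vs ! j" "last (drop j vs) = last vs"
    using j by (auto simp: hd_drop_conv_nth)
  ultimately show ?thesis using 1 2 unfolding has_temporal_path_def by metis
qed

lemma htp_cases: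
  assumes h: "has_temporal_path A lam x y" and a: "a \<in> A" and va: "v = fst a \<or> v = snd a"
  shows "(x, y) \<in> (und (A - {a}))\<^sup>* \<or> (has_temporal_path A lam x v \<and> has_temporal_path A lam v y)"
proof -
  obtain vs ts where tp: "temporal_path A lam vs ts" and hx: "hd vs = x" and ly: "last vs = y"
    using h unfolding has_temporal_path_def by auto
  show ?thesis
  proof (cases "v \<in> set vs")
    case True
    then obtain j where "j < length vs" "vs ! j = v" by (auto simp: in_set_conv_nth)
    then show ?thesis using path_split[OF tp] hx ly by metis
  next
    case False
    then show ?thesis using path_avoid[OF tp a va] hx ly by auto
  qed
qed

lemma mod_suc_if: assumes "i < (n::nat)" shows "(i + 1) mod n = (if i + 1 < n then i + 1 else 0)"
proof (cases "i + 1 < n")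
  case False
  then have "i + 1 = n" using \<open>i < n\<close> by simp
  then show ?thesis by simp
qed simp

theorem mainTheorem7:
  fixes V :: "'a set" and A :: "('a \<times> 'a) set" and lam :: "'a \<times> 'a \<Rightarrow> nat set"
    and tmax :: nat and cs :: "'a list"
  assumes "temporal_oriented_tree V A lam tmax"
    and "induced_cycle V (conn_graph_edges V A lam) cs"
    and "length cs \<ge> 4"
  shows "\<forall>v \<in> set cs. \<forall>a \<in> A. (v = fst a \<or> v = snd a) \<longrightarrow>
           (\<forall>x \<in> set cs - {v}. \<forall>y \<in> set cs - {v}. (x, y) \<in> (und (A - {a}))\<^sup>*)"
proof (intro ballI impI)
  fix v a x y
  assume vin: "v \<in> set cs" and a: "a \<in> A" and va: "v = fst a \<or> v = snd a"
    and x: "x \<in> set cs - {v}" and y: "y \<in> set cs - {v}"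
  define n where "n = length cs"
  define E where "E = conn_graph_edges V A lam"
  define R where "R = und (A - {a})"
  have n4: "n \<ge> 4" using assms(3) n_def by simp
  have sub: "set cs \<subseteq> V" and cyc: "is_cycle E cs" and dist: "distinct cs"
    and ind: "\<forall>i < n. \<forall>j < n. (cs ! i, cs ! j) \<in> E \<longrightarrow> j = (i + 1) mod n \<or> i = (j + 1) mod n"
    using assms(2) unfolding induced_cycle_def is_cycle_def E_def n_def by auto
  have edge: "\<forall>i < n. (cs ! i, cs ! ((i + 1) mod n)) \<in> E"
    using cyc unfolding is_cycle_def n_def by auto
  obtain p where p: "p < n" "cs ! p = v" using vin by (auto simp: in_set_conv_nth n_def)
  define g where "g k = (if p + k < n then p + k else p + k - n)" for k
  have symR: "sym (R\<^sup>*)" by (rule sym_rtrancl) (auto simp: sym_def R_def und_def)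
  have gk: "g k < n" if "k < n" for k using that p unfolding g_def by auto
  have gp: "g k \<noteq> p" if "0 < k" "k < n" for k using that p unfolding g_def by auto
  have gs: "g (k + 1) = (g k + 1) mod n" if "k + 1 < n" for k
    using that p gk[of k] mod_suc_if[of "g k" n] unfolding g_def by auto
  have step: "(cs ! g k, cs ! g (k + 1)) \<in> R\<^sup>*" if k: "1 \<le> k" "k + 1 < n" for k
  proof -
    define i where "i = g k"
    define j where "j = g (k + 1)"
    have i: "i < n" "i \<noteq> p" and j: "j < n" "j \<noteq> p" and ji: "j = (i + 1) mod n"
      using gk gp gs k unfolding i_def j_def by auto
    have vE: False if "(cs ! p, cs ! i) \<in> E" "(cs ! p, cs ! j) \<in> E"
    proof -
      have "i = (p + 1) mod n \<or> p = (i + 1) mod n" using ind that(1) p i by blast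
      moreover have "j = (p + 1) mod n \<or> p = (j + 1) mod n" using ind that(2) p j by blast
      ultimately show False using ji i j p n4 mod_suc_if[of i n] mod_suc_if[of j n] mod_suc_if[of p n]
        by (auto split: if_splits)
    qed
    have ne: "cs ! i \<noteq> v" "cs ! j \<noteq> v" using i j p dist n_def by (auto simp: nth_eq_iff_index_eq)
    have inV: "cs ! i \<in> V" "cs ! j \<in> V" "v \<in> V" using sub i j vin n_def by auto
    have tc: "temporally_connected A lam (cs ! i) (cs ! j)"
      using edge i ji unfolding E_def conn_graph_edges_def by auto
    have tcE: "(cs ! p, w) \<in> E" if "has_temporal_path A lam w v \<or> has_temporal_path A lam v w"
      "w \<in> V" "w \<noteq> v" for w
      using that p inV unfolding E_def conn_graph_edges_def temporally_connected_def by auto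
    show ?thesis
    proof (cases "has_temporal_path A lam (cs ! i) (cs ! j)")
      case True
      from htp_cases[OF True a va] show ?thesis
        using vE tcE[of "cs ! i"] tcE[of "cs ! j"] ne inV unfolding R_def i_def j_def by auto
    next
      case False
      then have h: "has_temporal_path A lam (cs ! j) (cs ! i)" using tc
        unfolding temporally_connected_def by auto
      from htp_cases[OF h a va] have "(cs ! j, cs ! i) \<in> R\<^sup>*"
        using vE tcE[of "cs ! i"] tcE[of "cs ! j"] ne inV unfolding R_def by auto
      then show ?thesis using symR unfolding i_def j_def by (auto simp: sym_def)
    qed
  qed
  have chain: "(cs ! g 1, cs ! g k) \<in> R\<^sup>*" if "1 \<le> k" "k < n" for k
    using that
  proof (induction k)
    case 0 then show ?case by simp
  next
    case (Suc k)
    show ?case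
    proof (cases "k = 0")
      case True then show ?thesis by simp
    next
      case False
      then have "(cs ! g 1, cs ! g k) \<in> R\<^sup>*" using Suc by auto
      moreover have "(cs ! g k, cs ! g (k + 1)) \<in> R\<^sup>*" using step[of k] Suc False by auto
      ultimately show ?thesis by simp
    qed
  qed
  have inv: "\<exists>k. 1 \<le> k \<and> k < n \<and> w = cs ! g k" if wv: "w \<in> set cs - {v}" for w
  proof -
    obtain i where i: "i < n" "cs ! i = w"
    proof -
      have "w \<in> set cs" using wv by simp
      then obtain i0 where "i0 < length cs" "cs ! i0 = w" unfolding in_set_conv_nth by blast
      then show ?thesis using that unfolding n_def by blast
    qed
    have "i \<noteq> p" using i p wv by auto
    define k where "k = (if p < i then i - p else n - p + i)"
    have "1 \<le> k \<and> k < n \<and> g k = i" using `i \<noteq> p` i p unfolding k_def g_def by auto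
    then show ?thesis using i by metis
  qed
  obtain kx where kx: "1 \<le> kx" "kx < n" "x = cs ! g kx" using inv[OF x] by auto
  obtain ky where ky: "1 \<le> ky" "ky < n" "y = cs ! g ky" using inv[OF y] by auto
  have "(x, cs ! g 1) \<in> R\<^sup>*" using chain[OF kx(1,2)] symR kx(3) by (auto simp: sym_def)
  moreover have "(cs ! g 1, y) \<in> R\<^sup>*" using chain[OF ky(1,2)] ky(3) by simp
  ultimately show "(x, y) \<in> (und (A - {a}))\<^sup>*" unfolding R_def by simp
qed

end
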